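(* Let $U,T,S\subseteq\mathbb{Z}_{>0}$ be finite with $U\preceq T\preceq S$. Assume there is $x\notin T$ with $|U_{<x}|=|T_{<x}|$, and assume there exists $y\in T_{<x}$ such that $(T\cup\{x\})\setminus\{y\}\preceq S$; let $y$ be the smallest such element. Then for every $S'\subseteq S$, $$U\triangleleft(T\triangleleft S')=U\triangleleft\big(((T\cup\{x\})\setminus\{y\})\triangleleft S'\big),$$ and consequently $U\triangleleft T=U\triangleleft((T\cup\{x\})\setminus\{y\})$.
   Context: For a finite set $S\subseteq\mathbb{Z}_{>0}$, $S(i)$ denotes its $i$th smallest element and $S_{<x}=\{s\in S:s<x\}$. $T\preceq S$ means $|T|\ge|S|$ and $T(i)<S(i)$ for all $i\in[|S|]$; $U\preceq T\preceq S$ means $U\preceq T$ and $T\preceq S$. For finite $S,T$, $T\triangleleft S$ is computed by going through $S$ from largest to smallest; each $s$ picks the largest element of $T$ less than $s$ not yet picked (if one exists); $T\triangleleft S$ is the set of picked elements. *)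

theory Defs
  imports Main
begin

(* S(i): the i-th smallest element (1-indexed) of a finite set S of naturals *)
definition nth_el :: "nat set \<Rightarrow> nat \<Rightarrow> nat" where
  "nth_el S i = sorted_list_of_set S ! (i - 1)"

definition below :: "nat set \<Rightarrow> nat \<Rightarrow> nat set" where
  "below S x = {s \<in> S. s < x}"

definition prec :: "nat set \<Rightarrow> nat set \<Rightarrow> bool" where
  "prec T S \<longleftrightarrow> card T \<ge> card S \<and> (\<forall>i\<in>{1..card S}. nth_el T i < nth_el S i)"

definition pick_step :: "nat set \<Rightarrow> nat \<Rightarrow> nat set \<Rightarrow> nat set" where
  "pick_step T s P =
     (if \<exists>t\<in>T - P. t < s then insert (Max {t \<in> T - P. t < s}) P else P)"

definition tri :: "nat set \<Rightarrow> nat set \<Rightarrow> nat set" where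
  "tri T S = fold (pick_step T) (rev (sorted_list_of_set S)) {}"

end

theory Submission
  imports Defs
begin

definition N :: "nat set \<Rightarrow> nat \<Rightarrow> int" where
  "N X v = int (card {z\<in>X. z < v})"

lemma sl_lt_iff:
  assumes "finite X" "i < card X" "j < card X"
  shows "sorted_list_of_set X ! j < sorted_list_of_set X ! i \<longleftrightarrow> j < i"
proof -
  have s: "sorted_wrt (<) (sorted_list_of_set X)" by (rule strict_sorted_list_of_set)
  have l: "length (sorted_list_of_set X) = card X" using assms by simp
  show ?thesis
  proof
    assume "sorted_list_of_set X ! j < sorted_list_of_set X ! i"
    then show "j < i" using s l assms
      by (metis linorder_neqE_nat not_less_iff_gr_or_eq order_less_asym sorted_wrt_nth_less)
  next
    assume "j < i" then show "sorted_list_of_set X ! j < sorted_list_of_set X ! i"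
      using s l assms by (simp add: sorted_wrt_nth_less)
  qed
qed

lemma rank_lt:
  assumes "finite X" "i < card X"
  shows "card {z\<in>X. z < sorted_list_of_set X ! i} = i"
proof -
  let ?xs = "sorted_list_of_set X"
  have l: "length ?xs = card X" using assms by simp
  have "{z\<in>X. z < ?xs ! i} = set (take i ?xs)"
  proof safe
    fix z assume "z \<in> X" "z < ?xs ! i"
    then obtain j where j: "j < length ?xs" "z = ?xs ! j"
      using assms by (metis in_set_conv_nth set_sorted_list_of_set)
    then have "j < i" using sl_lt_iff[OF assms(1) assms(2), of j] `z < ?xs ! i` l by simp
    then show "z \<in> set (take i ?xs)" using j by (metis in_set_conv_nth length_take min_less_iff_conj nth_take)
  next
    fix z assume "z \<in> set (take i ?xs)"
    then show "z \<in> X" using set_sorted_list_of_set[OF assms(1)] by (metis in_set_takeD)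
  next
    fix z assume "z \<in> set (take i ?xs)"
    then obtain j where j: "j < i" "z = ?xs ! j" using l assms
      by (auto simp: in_set_conv_nth)
    then show "z < ?xs ! i" using sl_lt_iff[OF assms(1) assms(2), of j] assms by simp
  qed
  moreover have "distinct (take i ?xs)" by simp
  ultimately show ?thesis using l assms by (simp add: distinct_card)
qed

lemma rank_le:
  assumes "finite X" "i < card X"
  shows "card {z\<in>X. z \<le> sorted_list_of_set X ! i} = Suc i"
proof -
  let ?a = "sorted_list_of_set X ! i"
  have a: "?a \<in> X" using assms by (metis length_sorted_list_of_set nth_mem set_sorted_list_of_set)
  have "{z\<in>X. z \<le> ?a} = insert ?a {z\<in>X. z < ?a}" using a by auto
  then show ?thesis using rank_lt[OF assms] assms by simp
qed

lemma prec_iff: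
  assumes "finite T" "finite S"
  shows "prec T S \<longleftrightarrow> (\<forall>v. card {s\<in>S. s \<le> v} \<le> card {t\<in>T. t < v})"
proof
  assume p: "prec T S"
  show "\<forall>v. card {s\<in>S. s \<le> v} \<le> card {t\<in>T. t < v}"
  proof
    fix v
    let ?j = "card {s\<in>S. s \<le> v}"
    show "?j \<le> card {t\<in>T. t < v}"
    proof (cases "?j = 0")
      case True then show ?thesis by (metis le0)
    next
      case False
      have jS: "?j \<le> card S" using assms by (intro card_mono) auto
      have cT: "card S \<le> card T" using p by (simp add: prec_def)
      have sv: "sorted_list_of_set S ! (?j - 1) \<le> v"
      proof (rule ccontr)
        assume "\<not> ?thesis"
        then have "{s\<in>S. s \<le> v} \<subseteq> {s\<in>S. s < sorted_list_of_set S ! (?j - 1)}" by auto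
        then have "?j \<le> card {s\<in>S. s < sorted_list_of_set S ! (?j - 1)}"
          using assms by (intro card_mono) auto
        also have "\<dots> = ?j - 1" by (rule rank_lt[OF assms(2)]) (use jS False in linarith)
        finally show False using False by linarith
      qed
      have j1: "1 \<le> ?j" using False by linarith
      have "?j \<in> {1..card S}" by (rule atLeastAtMost_iff[THEN iffD2, OF conjI[OF j1 jS]])
      then have "nth_el T ?j < nth_el S ?j" using p unfolding prec_def by blast
      then have tv: "sorted_list_of_set T ! (?j - 1) < v" using sv by (simp add: nth_el_def)
      have "{t\<in>T. t \<le> sorted_list_of_set T ! (?j - 1)} \<subseteq> {t\<in>T. t < v}" using tv by auto
      then have "card {t\<in>T. t \<le> sorted_list_of_set T ! (?j - 1)} \<le> card {t\<in>T. t < v}"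
        using assms by (intro card_mono) auto
      moreover have "card {t\<in>T. t \<le> sorted_list_of_set T ! (?j - 1)} = ?j"
        proof -
        have "?j - 1 < card T" using jS cT False by linarith
        from rank_le[OF assms(1) this] show ?thesis using False by simp
      qed
      ultimately show ?thesis by simp
    qed
  qed
next
  assume c: "\<forall>v. card {s\<in>S. s \<le> v} \<le> card {t\<in>T. t < v}"
  have cT: "card S \<le> card T"
  proof (cases "S = {}")
    case True then show ?thesis by simp
  next
    case False
    have "{s\<in>S. s \<le> Max S} = S" using assms False by auto
    then have "card S \<le> card {t\<in>T. t < Max S}" using c by metis
    also have "\<dots> \<le> card T" using assms by (intro card_mono) auto
    finally show ?thesis .
  qed
  moreover have "\<forall>i\<in>{1..card S}. nth_el T i < nth_el S i"
  proof
    fix i assume i: "i \<in> {1..card S}"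
    let ?v = "sorted_list_of_set S ! (i - 1)"
    have "card {s\<in>S. s \<le> ?v} = i" using rank_le[OF assms(2), of "i - 1"] i by auto
    then have ci: "i \<le> card {t\<in>T. t < ?v}" using c by metis
    show "nth_el T i < nth_el S i"
    proof (rule ccontr)
      assume "\<not> ?thesis"
      then have "?v \<le> sorted_list_of_set T ! (i - 1)" by (simp add: nth_el_def)
      then have "{t\<in>T. t < ?v} \<subseteq> {t\<in>T. t < sorted_list_of_set T ! (i - 1)}" by auto
      then have "card {t\<in>T. t < ?v} \<le> card {t\<in>T. t < sorted_list_of_set T ! (i - 1)}"
        using assms by (intro card_mono) auto
      also have "\<dots> = i - 1" using rank_lt[OF assms(1), of "i - 1"] i cT by auto
      finally show False using ci i by auto
    qed
  qed
  ultimately show "prec T S" by (simp add: prec_def)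
qed


lemma N_Suc: "finite X \<Longrightarrow> N X (Suc v) = N X v + (if v \<in> X then 1 else 0)"
proof -
  assume f: "finite X"
  show ?thesis
  proof (cases "v \<in> X")
    case True
    have "{z\<in>X. z < Suc v} = insert v {z\<in>X. z < v}" using True by auto
    then show ?thesis using True f by (simp add: N_def)
  next
    case False
    have "{z\<in>X. z < Suc v} = {z\<in>X. z < v}" using False less_Suc_eq by auto
    then show ?thesis using False by (simp add: N_def)
  qed
qed

lemma N_mono: "finite X \<Longrightarrow> a \<le> b \<Longrightarrow> N X a \<le> N X b"
  unfolding N_def by (auto intro!: card_mono)

lemma N_seg: "finite X \<Longrightarrow> a \<le> b \<Longrightarrow> N X b = N X a + int (card {z\<in>X. a \<le> z \<and> z < b})"
proof -
  assume f: "finite X" and ab: "a \<le> b"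
  have "{z\<in>X. z < b} = {z\<in>X. z < a} \<union> {z\<in>X. a \<le> z \<and> z < b}" using ab by auto
  moreover have "card ({z\<in>X. z < a} \<union> {z\<in>X. a \<le> z \<and> z < b}) = card {z\<in>X. z < a} + card {z\<in>X. a \<le> z \<and> z < b}"
    using f by (intro card_Un_disjoint) auto
  ultimately show ?thesis by (simp add: N_def)
qed

lemma N_sub_eq:
  assumes "finite T" "B \<subseteq> T" "\<And>z. z \<in> T \<Longrightarrow> a \<le> z \<Longrightarrow> z < b \<Longrightarrow> z \<in> B" "a \<le> b"
  shows "N B b - N B a = N T b - N T a"
proof -
  have fB: "finite B" using assms finite_subset by blast
  have "{z\<in>B. a \<le> z \<and> z < b} = {z\<in>T. a \<le> z \<and> z < b}" using assms by auto
  then show ?thesis using N_seg[OF fB assms(4)] N_seg[OF assms(1) assms(4)] by simp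
qed

lemma N_empty_seg:
  assumes "finite X" "\<And>z. z \<in> X \<Longrightarrow> a \<le> z \<Longrightarrow> z < b \<Longrightarrow> False" "a \<le> b"
  shows "N X b = N X a"
proof -
  have "{z\<in>X. a \<le> z \<and> z < b} = {}" using assms by auto
  then show ?thesis using N_seg[OF assms(1) assms(3)] by simp
qed

lemma N_elem: "finite X \<Longrightarrow> t \<in> X \<Longrightarrow> t < m \<Longrightarrow> N X t + 1 \<le> N X m"
  using N_Suc[of X t] N_mono[of X "Suc t" m] by simp

lemma N_subset:
  assumes "finite S" "A \<subseteq> S" "a \<le> b"
  shows "N A b - N A a \<le> N S b - N S a"
proof -
  have fA: "finite A" using assms finite_subset by blast
  have "card {z\<in>A. a \<le> z \<and> z < b} \<le> card {z\<in>S. a \<le> z \<and> z < b}"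
    using assms by (intro card_mono) auto
  then show ?thesis using N_seg[OF fA assms(3)] N_seg[OF assms(1) assms(3)] by simp
qed

lemma N_insert: "finite X \<Longrightarrow> x \<notin> X \<Longrightarrow> N (insert x X) v = N X v + (if x < v then 1 else 0)"
proof -
  assume f: "finite X" and x: "x \<notin> X"
  show ?thesis
  proof (cases "x < v")
    case True
    have "{z\<in>insert x X. z < v} = insert x {z\<in>X. z < v}" using True by auto
    then show ?thesis using True f x by (simp add: N_def)
  next
    case False
    have "{z\<in>insert x X. z < v} = {z\<in>X. z < v}" using False by auto
    then show ?thesis using False by (simp add: N_def)
  qed
qed

lemma N_remove: "finite X \<Longrightarrow> y \<in> X \<Longrightarrow> N (X - {y}) v = N X v - (if y < v then 1 else 0)"
proof -
  assume f: "finite X" and y: "y \<in> X"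
  have "N X v = N (insert y (X - {y})) v" using y by (simp add: insert_absorb)
  also have "\<dots> = N (X - {y}) v + (if y < v then 1 else 0)" using f by (intro N_insert) auto
  finally show ?thesis by simp
qed

lemma N_swap: "finite T \<Longrightarrow> y \<in> T \<Longrightarrow> x \<notin> T \<Longrightarrow>
   N (insert x (T - {y})) v = N T v + (if x < v then 1 else 0) - (if y < v then 1 else 0)"
  using N_insert[of "T - {y}" x v] N_remove[of T y v] by simp

lemma N_low: "finite X \<Longrightarrow> (\<And>z. z \<in> X \<Longrightarrow> a < z) \<Longrightarrow> v \<le> Suc a \<Longrightarrow> N X v = 0"
  unfolding N_def by (auto simp: card_eq_0_iff) (meson less_Suc_eq_le not_le order_less_le_trans)

definition Q :: "nat set \<Rightarrow> nat set \<Rightarrow> nat \<Rightarrow> bool" where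
  "Q T A t \<longleftrightarrow> (\<exists>m>t. N T m - N T t \<le> N A (Suc m) - N A (Suc t))"

lemma tri_empty: "tri T {} = {}"
  by (simp add: tri_def)

lemma tri_min:
  assumes "finite A" "A \<noteq> {}"
  shows "tri T A = pick_step T (Min A) (tri T (A - {Min A}))"
  using assms by (simp add: tri_def sorted_list_of_set_nonempty)


lemma CH_step:
  assumes fT: "finite T" and fA: "finite A0" and gt: "\<And>z. z \<in> A0 \<Longrightarrow> a < z"
    and IH: "tri T A0 = {t\<in>T. Q T A0 t}"
  shows "tri T (insert a A0) = {t\<in>T. Q T (insert a A0) t}"
proof -
  let ?A = "insert a A0"
  let ?P0 = "tri T A0"
  have aA0: "a \<notin> A0" using gt by blast
  have NA: "\<And>v. N ?A v = N A0 v + (if a < v then 1 else 0)" using N_insert[OF fA aA0] by simp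
  have N0: "\<And>v. v \<le> Suc a \<Longrightarrow> N A0 v = 0" using N_low[OF fA gt] by blast
  have Min: "Min ?A = a" using fA gt by (auto intro!: Min_eqI) (meson less_imp_le)
  have rem: "?A - {a} = A0" using aA0 by auto
  have tA: "tri T ?A = pick_step T a ?P0" using tri_min[of ?A T] fA Min rem by simp
  have hi: "\<And>t. a \<le> t \<Longrightarrow> Q T ?A t \<longleftrightarrow> Q T A0 t"
    unfolding Q_def using NA by auto
  have mono: "\<And>t. Q T A0 t \<Longrightarrow> Q T ?A t"
  proof -
    fix t assume "Q T A0 t"
    then obtain m where m: "m > t" "N T m - N T t \<le> N A0 (Suc m) - N A0 (Suc t)" unfolding Q_def by blast
    have "N A0 (Suc m) - N A0 (Suc t) \<le> N ?A (Suc m) - N ?A (Suc t)" using NA m(1) by auto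
    then show "Q T ?A t" unfolding Q_def using m by force
  qed
  have lowm: "\<And>t m. t \<in> T \<Longrightarrow> t < m \<Longrightarrow> N T m - N T t \<le> N ?A (Suc m) - N ?A (Suc t) \<Longrightarrow> a \<le> m"
  proof (rule ccontr)
    fix t m assume t: "t \<in> T" "t < m" "N T m - N T t \<le> N ?A (Suc m) - N ?A (Suc t)" "\<not> a \<le> m"
    have "N ?A (Suc m) = 0" "N ?A (Suc t) = 0" using NA N0 t by auto
    moreover have "N T t + 1 \<le> N T m" using N_elem[OF fT t(1) t(2)] .
    ultimately show False using t(3) by simp
  qed
  show ?thesis
  proof (cases "\<exists>t\<in>T - ?P0. t < a")
    case False
    have "tri T ?A = ?P0" using tA False by (simp add: pick_step_def)
    also have "\<dots> = {t\<in>T. Q T ?A t}"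
    proof (rule set_eqI, rule iffI)
      fix t assume "t \<in> ?P0" then show "t \<in> {t\<in>T. Q T ?A t}" using IH mono by auto
    next
      fix t assume t: "t \<in> {t\<in>T. Q T ?A t}"
      show "t \<in> ?P0"
      proof (cases "a \<le> t")
        case True then show ?thesis using t hi IH by auto
      next
        case False then show ?thesis using t \<open>\<not> (\<exists>t\<in>T - ?P0. t < a)\<close> by (metis (no_types, lifting) DiffI mem_Collect_eq not_le)
      qed
    qed
    finally show ?thesis .
  next
    case True
    define C where "C = {t\<in>T - ?P0. t < a}"
    define c where "c = Max C"
    have fC: "finite C" "C \<noteq> {}" using True fT unfolding C_def by auto
    have cC: "c \<in> C" using fC Max_in c_def by blast
    have cmax: "\<And>t. t \<in> C \<Longrightarrow> t \<le> c" using fC c_def by auto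
    have cT: "c \<in> T" "c \<notin> ?P0" "c < a" using cC C_def by auto
    have tri_eq: "tri T ?A = insert c ?P0" using tA True by (simp add: pick_step_def C_def c_def)
    have notQc: "\<not> Q T A0 c" using cT IH by auto
    have Qc: "Q T ?A c"
    proof (cases "\<exists>t\<in>T. c < t \<and> t < a")
      case False
      have "N T a = N T (Suc c)" using False cT by (intro N_empty_seg[OF fT]) auto
      then have "N T a - N T c = 1" using N_Suc[OF fT, of c] cT by simp
      moreover have "N ?A (Suc a) - N ?A (Suc c) = 1" using NA N0 cT by auto
      ultimately show ?thesis unfolding Q_def using cT(3) by (intro exI[of _ a]) auto
    next
      case True
      define D where "D = {t\<in>T. c < t \<and> t < a}"
      define t1 where "t1 = Min D"
      have fD: "finite D" "D \<noteq> {}" using True fT unfolding D_def by auto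
      have t1D: "t1 \<in> D" using fD Min_in t1_def by blast
      have t1min: "\<And>t. t \<in> D \<Longrightarrow> t1 \<le> t" using fD t1_def by auto
      have t1: "t1 \<in> T" "c < t1" "t1 < a" using t1D D_def by auto
      have "t1 \<notin> C" using cmax t1 by force
      then have "t1 \<in> ?P0" using t1 C_def by auto
      then have "Q T A0 t1" using IH by auto
      then obtain m1 where m1: "m1 > t1" "N T m1 - N T t1 \<le> N A0 (Suc m1) - N A0 (Suc t1)"
        unfolding Q_def by blast
      have z1: "N A0 (Suc t1) = 0" using N0 t1 by simp
      have "N T t1 + 1 \<le> N T m1" using N_elem[OF fT t1(1) m1(1)] .
      then have "N A0 (Suc m1) \<ge> 1" using m1 z1 by simp
      then have am1: "a \<le> m1" using N0[of "Suc m1"] by (cases "a \<le> m1") auto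
      have "N T t1 = N T (Suc c)"
        using t1min t1 unfolding D_def by (intro N_empty_seg[OF fT]) force+
      then have "N T t1 = N T c + 1" using N_Suc[OF fT, of c] cT by simp
      moreover have "N ?A (Suc m1) = N A0 (Suc m1) + 1" "N ?A (Suc c) = 0" using NA N0 am1 cT by auto
      ultimately have "N T m1 - N T c \<le> N ?A (Suc m1) - N ?A (Suc c)" using m1 z1 by simp
      then show ?thesis unfolding Q_def using m1 t1 by (intro exI[of _ m1]) auto
    qed
    have "insert c ?P0 = {t\<in>T. Q T ?A t}"
    proof (rule set_eqI, rule iffI)
      fix t assume "t \<in> insert c ?P0" then show "t \<in> {t\<in>T. Q T ?A t}" using IH mono cT Qc by auto
    next
      fix t assume t: "t \<in> {t\<in>T. Q T ?A t}"
      show "t \<in> insert c ?P0"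
      proof (rule ccontr)
        assume nt: "t \<notin> insert c ?P0"
        then have nQ: "\<not> Q T A0 t" "t \<noteq> c" using t IH by auto
        show False
        proof (cases "a \<le> t")
          case True then show ?thesis using t hi nQ by auto
        next
          case False
          then have "t \<in> C" using t nt C_def by auto
          then have tc: "t < c" using cmax nQ(2) by force
          obtain m where m: "m > t" "N T m - N T t \<le> N ?A (Suc m) - N ?A (Suc t)"
            using t unfolding Q_def by blast
          have am: "a \<le> m" using lowm[OF _ m(1) m(2)] t by auto
          have "\<not> (N T m - N T c \<le> N A0 (Suc m) - N A0 (Suc c))" using notQc am cT unfolding Q_def by auto
          moreover have "N A0 (Suc c) = 0" "N ?A (Suc t) = 0" "N ?A (Suc m) = N A0 (Suc m) + 1"
            using N0 NA cT False am by auto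
          moreover have "N T t + 1 \<le> N T c" using N_elem[OF fT _ tc] t by auto
          ultimately show False using m(2) by simp
        qed
      qed
    qed
    then show ?thesis using tri_eq by simp
  qed
qed

theorem CH:
  assumes "finite T" "finite A"
  shows "tri T A = {t\<in>T. Q T A t}"
  using assms(2)
proof (induction A rule: finite_linorder_min_induct)
  case empty
  have "\<And>t. t \<in> T \<Longrightarrow> \<not> Q T {} t"
  proof
    fix t assume tT: "t \<in> T" and "Q T {} t"
    then obtain m where m: "m > t" "N T m - N T t \<le> N {} (Suc m) - N {} (Suc t)" unfolding Q_def by blast
    have "N T t + 1 \<le> N T m" using N_elem[OF assms(1) tT m(1)] .
    moreover have "N {} v = 0" for v by (simp add: N_def)
    ultimately show False using m(2) by simp
  qed
  then show ?case by (auto simp: tri_empty)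
next
  case (insert b A)
  then show ?case using CH_step[OF assms(1), of A b] by blast
qed


lemma prec_N:
  assumes "finite T" "finite S"
  shows "prec T S \<longleftrightarrow> (\<forall>v. N S (Suc v) \<le> N T v)"
proof -
  have "\<And>v. {s\<in>S. s \<le> v} = {s\<in>S. s < Suc v}" by auto
  then show ?thesis unfolding prec_iff[OF assms] N_def by simp
qed

lemma merge:
  assumes fX: "finite X" and xX: "x \<in> X" and fA: "finite A"
  shows "c \<le> x \<Longrightarrow> (\<And>z. z \<in> X \<Longrightarrow> c \<le> z \<Longrightarrow> z \<le> x \<Longrightarrow> Q X A z) \<Longrightarrow>
    \<exists>M>x. N X M - N X c \<le> N A (Suc M) - N A (Suc c)"
proof (induction "x - c" arbitrary: c rule: less_induct)
  case less
  define D where "D = {z\<in>X. c \<le> z \<and> z \<le> x}"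
  have fD: "finite D" "D \<noteq> {}" using fX xX less.prems(1) unfolding D_def by auto
  define t1 where "t1 = Min D"
  have t1D: "t1 \<in> D" using fD Min_in t1_def by blast
  have t1min: "\<And>t. t \<in> D \<Longrightarrow> t1 \<le> t" using fD t1_def by auto
  have t1: "t1 \<in> X" "c \<le> t1" "t1 \<le> x" using t1D D_def by auto
  have "Q X A t1" using less.prems(2) t1 by blast
  then obtain m1 where m1: "m1 > t1" "N X m1 - N X t1 \<le> N A (Suc m1) - N A (Suc t1)"
    unfolding Q_def by blast
  have e1: "N X t1 = N X c" using t1min t1 unfolding D_def
    by (intro N_empty_seg[OF fX]) force+
  have e2: "N A (Suc c) \<le> N A (Suc t1)" using N_mono[OF fA] t1 by simp
  have seg1: "N X m1 - N X c \<le> N A (Suc m1) - N A (Suc c)" using m1 e1 e2 by linarith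
  show ?case
  proof (cases "x < m1")
    case True then show ?thesis using seg1 by blast
  next
    case False
    have lt: "x - m1 < x - c" using False m1 t1 by linarith
    have "\<exists>M>x. N X M - N X m1 \<le> N A (Suc M) - N A (Suc m1)"
      using less.hyps[OF lt] False less.prems(2) m1 t1 by force
    then obtain M where "M > x" "N X M - N X m1 \<le> N A (Suc M) - N A (Suc m1)" by blast
    then show ?thesis using seg1 by (intro exI[of _ M]) auto
  qed
qed


lemma structural:
  assumes fT: "finite T" and fA: "finite A" and yT: "y \<in> T" and xT: "x \<notin> T" and yx: "y < x"
    and F: "\<And>v. y \<le> v \<Longrightarrow> N A (Suc v) - N A (Suc y)
              \<le> N (insert x (T - {y})) v - N (insert x (T - {y})) (Suc y)"
  shows "tri (insert x (T - {y})) A = tri T A \<or>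
    (\<exists>b\<in>tri T A. b < x \<and> (\<forall>z\<in>T. b < z \<and> z < x \<longrightarrow> z \<in> tri T A)
        \<and> tri (insert x (T - {y})) A = insert x (tri T A - {b}))"
proof -
  define T' where "T' = insert x (T - {y})"
  have fT': "finite T'" using fT T'_def by simp
  have NT: "\<And>v. N T' v = N T v + (if x < v then 1 else 0) - (if y < v then 1 else 0)"
    unfolding T'_def using N_swap[OF fT yT xT] by simp
  have NS: "\<And>v. N T (Suc v) = N T v + (if v \<in> T then 1 else 0)" using N_Suc[OF fT] by simp
  have F': "\<And>v. y \<le> v \<Longrightarrow> N A (Suc v) - N A (Suc y) \<le> N T' v - N T' (Suc y)"
    using F T'_def by simp
  define B where "B = tri T A"
  define B' where "B' = tri T' A"
  have B: "B = {t\<in>T. Q T A t}" using CH[OF fT fA] B_def by simp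
  have B': "B' = {t\<in>T'. Q T' A t}" using CH[OF fT' fA] B'_def by simp
  have T'mem: "\<And>t. t \<in> T' \<longleftrightarrow> t = x \<or> (t \<in> T \<and> t \<noteq> y)" unfolding T'_def by auto
  have S1: "\<And>t. t \<in> T \<Longrightarrow> x < t \<Longrightarrow> Q T A t \<longleftrightarrow> Q T' A t"
  proof -
    fix t assume t: "t \<in> T" "x < t"
    have "\<And>m. m > t \<Longrightarrow> N T' m - N T' t = N T m - N T t" using NT t yx by simp
    then show "Q T A t \<longleftrightarrow> Q T' A t" unfolding Q_def by auto
  qed
  have S2: "\<And>t. t \<in> T \<Longrightarrow> t < y \<Longrightarrow> Q T A t \<longleftrightarrow> Q T' A t"
  proof
    fix t assume t: "t \<in> T" "t < y" "Q T A t"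
    then obtain m where m: "m > t" "N T m - N T t \<le> N A (Suc m) - N A (Suc t)" unfolding Q_def by blast
    have "N T' m - N T' t \<le> N T m - N T t" using NT t yx by simp
    then show "Q T' A t" using m unfolding Q_def by force
  next
    fix t assume t: "t \<in> T" "t < y" "Q T' A t"
    then obtain m where m: "m > t" "N T' m - N T' t \<le> N A (Suc m) - N A (Suc t)" unfolding Q_def by blast
    show "Q T A t"
    proof (cases "y < m \<and> m \<le> x")
      case True
      have a1: "N T' m = N T m - 1" "N T' t = N T t" "N T' (Suc y) = N T (Suc y) - 1"
        using NT True t yx by auto
      have a2: "N T (Suc y) = N T y + 1" using NS yT by simp
      have a3: "N A (Suc m) - N A (Suc y) \<le> N T' m - N T' (Suc y)" using F' True by simp
      have "N T y - N T t \<le> N A (Suc y) - N A (Suc t)" using a1 a2 a3 m(2) by linarith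
      then show ?thesis unfolding Q_def using t(2) by blast
    next
      case False
      then have "N T' m - N T' t = N T m - N T t" using NT t yx m(1) by auto
      then show ?thesis using m unfolding Q_def by force
    qed
  qed
  have S3: "\<And>t. t \<in> T \<Longrightarrow> y < t \<Longrightarrow> t < x \<Longrightarrow> Q T' A t \<Longrightarrow> Q T A t"
  proof -
    fix t assume t: "t \<in> T" "y < t" "t < x" "Q T' A t"
    then obtain m where m: "m > t" "N T' m - N T' t \<le> N A (Suc m) - N A (Suc t)" unfolding Q_def by blast
    have "N T m - N T t \<le> N T' m - N T' t" using NT t m(1) by simp
    then show "Q T A t" using m unfolding Q_def by force
  qed
  have Bd: "\<And>t m. t \<in> T \<Longrightarrow> y \<le> t \<Longrightarrow> t < x \<Longrightarrow> t \<notin> B' \<Longrightarrow> m > t \<Longrightarrow>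
      N A (Suc m) - N A (Suc t) \<le> N T m - N T (Suc t) + (if x < m then 1 else 0)"
  proof -
    fix t m assume t: "t \<in> T" "y \<le> t" "t < x" "t \<notin> B'" "m > t"
    show "N A (Suc m) - N A (Suc t) \<le> N T m - N T (Suc t) + (if x < m then 1 else 0)"
    proof (cases "t = y")
      case True
      have "N A (Suc m) - N A (Suc y) \<le> N T' m - N T' (Suc y)" using F' t True by simp
      moreover have "N T' m = N T m + (if x < m then 1 else 0) - 1" "N T' (Suc y) = N T (Suc y) - 1"
        using NT True t yx by auto
      ultimately show ?thesis using True by simp
    next
      case False
      then have "t \<in> T'" using T'mem t by auto
      then have "\<not> Q T' A t" using t(4) B' by auto
      then have "\<not> (N T' m - N T' t \<le> N A (Suc m) - N A (Suc t))" using t(5) unfolding Q_def by blast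
      moreover have "N T' m = N T m + (if x < m then 1 else 0) - 1" "N T' t = N T t - 1"
        using NT False t by auto
      moreover have "N T (Suc t) = N T t + 1" using NS t by simp
      ultimately show ?thesis by simp
    qed
  qed
  define D where "D = {t\<in>T. y \<le> t \<and> t < x \<and> Q T A t \<and> t \<notin> B'}"
  have S4: "\<And>t. t \<in> D \<Longrightarrow> \<exists>m>x. N T m - N T t \<le> N A (Suc m) - N A (Suc t)"
  proof -
    fix t assume t: "t \<in> D"
    then obtain m where m: "m > t" "N T m - N T t \<le> N A (Suc m) - N A (Suc t)" unfolding D_def Q_def by blast
    have "N A (Suc m) - N A (Suc t) \<le> N T m - N T (Suc t) + (if x < m then 1 else 0)"
      using Bd t m(1) unfolding D_def by blast
    moreover have "N T (Suc t) = N T t + 1" using NS t unfolding D_def by simp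
    ultimately have "x < m" using m(2) by (cases "x < m") auto
    then show "\<exists>m>x. N T m - N T t \<le> N A (Suc m) - N A (Suc t)" using m by blast
  qed
  have S5: "\<And>t t'. t \<in> D \<Longrightarrow> t' \<in> D \<Longrightarrow> t < t' \<Longrightarrow> False"
  proof -
    fix t t' assume t: "t \<in> D" "t' \<in> D" "t < t'"
    obtain m where m: "m > x" "N T m - N T t \<le> N A (Suc m) - N A (Suc t)" using S4 t(1) by blast
    have tt: "t \<in> T" "y \<le> t" "t < x" "t \<notin> B'" "t' \<in> T" "y \<le> t'" "t' < x" "t' \<notin> B'"
      using t unfolding D_def by auto
    have b1: "N A (Suc t') - N A (Suc t) \<le> N T t' - N T (Suc t)"
      using Bd[OF tt(1-4) t(3)] tt by simp
    have b2: "N A (Suc m) - N A (Suc t') \<le> N T m - N T (Suc t') + 1"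
      using Bd[OF tt(5-8), of m] m tt by simp
    have "N T (Suc t) = N T t + 1" "N T (Suc t') = N T t' + 1" using NS tt by auto
    then show False using b1 b2 m(2) by linarith
  qed
  have S6: "\<And>t. t \<in> D \<Longrightarrow> x \<in> B' \<and> (\<forall>z\<in>T. t < z \<and> z < x \<longrightarrow> z \<in> B)"
  proof -
    fix t assume t: "t \<in> D"
    obtain m where m: "m > x" "N T m - N T t \<le> N A (Suc m) - N A (Suc t)" using S4 t by blast
    have tt: "t \<in> T" "y \<le> t" "t < x" "t \<notin> B'" using t unfolding D_def by auto
    have st: "N T (Suc t) = N T t + 1" using NS tt by simp
    have "N A (Suc x) - N A (Suc t) \<le> N T x - N T (Suc t)" using Bd[OF tt, of x] tt by simp
    moreover have "N T' m = N T m" "N T' x = N T x - 1" using NT m yx by auto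
    ultimately have "N T' m - N T' x \<le> N A (Suc m) - N A (Suc x)" using m st by linarith
    then have "Q T' A x" unfolding Q_def using m by blast
    then have xB': "x \<in> B'" using B' T'mem by auto
    have "\<forall>z\<in>T. t < z \<and> z < x \<longrightarrow> z \<in> B"
    proof (intro ballI impI)
      fix z assume z: "z \<in> T" "t < z \<and> z < x"
      have "N A (Suc z) - N A (Suc t) \<le> N T z - N T (Suc t)" using Bd[OF tt, of z] z by simp
      then have "N T m - N T z \<le> N A (Suc m) - N A (Suc z)" using m st by linarith
      then have "Q T A z" unfolding Q_def using m z by (intro exI[of _ m]) auto
      then show "z \<in> B" using B z by auto
    qed
    then show "x \<in> B' \<and> (\<forall>z\<in>T. t < z \<and> z < x \<longrightarrow> z \<in> B)" using xB' by blast
  qed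
  have S7: "x \<in> B' \<Longrightarrow> D \<noteq> {}"
  proof -
    assume xB': "x \<in> B'"
    define E where "E = {t\<in>T. y \<le> t \<and> t < x \<and> t \<notin> B'}"
    have yE: "y \<in> E" unfolding E_def using yT yx B' T'mem by auto
    have fE: "finite E" using fT E_def by simp
    define ts where "ts = Max E"
    have tsE: "ts \<in> E" using fE yE Max_in ts_def by blast
    have tsmax: "\<And>t. t \<in> E \<Longrightarrow> t \<le> ts" using fE ts_def by simp
    have ts: "ts \<in> T" "y \<le> ts" "ts < x" "ts \<notin> B'" using tsE E_def by auto
    have "\<exists>M>x. N T' M - N T' (Suc ts) \<le> N A (Suc M) - N A (Suc (Suc ts))"
    proof (rule merge[OF fT' _ fA])
      show "x \<in> T'" using T'mem by simp
      show "Suc ts \<le> x" using ts by simp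
      fix z assume z: "z \<in> T'" "Suc ts \<le> z" "z \<le> x"
      show "Q T' A z"
      proof (cases "z = x")
        case True then show ?thesis using xB' B' by simp
      next
        case False
        have zT: "z \<in> T" using z T'mem False by auto
        have zE: "z \<notin> E" using tsmax z by force
        have zx: "z < x" using z(3) False by simp
        have yz: "y \<le> z" using ts z by simp
        have "z \<in> B'"
        proof (rule ccontr)
          assume "z \<notin> B'"
          then have "z \<in> E" unfolding E_def using zT yz zx by blast
          then show False using zE by blast
        qed
        then show ?thesis using B' by simp
      qed
    qed
    then obtain M where M: "M > x" "N T' M - N T' (Suc ts) \<le> N A (Suc M) - N A (Suc (Suc ts))" by blast
    have "N T' M = N T M" "N T' (Suc ts) = N T (Suc ts) - 1" using NT M ts yx by auto
    moreover have "N T (Suc ts) = N T ts + 1" using NS ts by simp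
    moreover have "N A (Suc ts) \<le> N A (Suc (Suc ts))" using N_mono[OF fA] by simp
    ultimately have "N T M - N T ts \<le> N A (Suc M) - N A (Suc ts)" using M by linarith
    then have "Q T A ts" unfolding Q_def using M ts by (intro exI[of _ M]) auto
    then have "ts \<in> D" unfolding D_def using ts by auto
    then show "D \<noteq> {}" by blast
  qed
  have sub1: "B' \<subseteq> insert x B"
  proof
    fix t assume t: "t \<in> B'"
    show "t \<in> insert x B"
    proof (cases "t = x")
      case False
      then have tT: "t \<in> T" "t \<noteq> y" "Q T' A t" using t B' T'mem by auto
      have "Q T A t"
      proof -
        consider "x < t" | "t < y" | "y < t \<and> t < x" using tT False by linarith
        then show ?thesis using S1 S2 S3 tT by cases blast+
      qed
      then show ?thesis using B tT by auto
    qed simp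
  qed
  have sub2: "B - B' \<subseteq> D"
  proof
    fix t assume t: "t \<in> B - B'"
    then have tT: "t \<in> T" "Q T A t" "t \<notin> B'" using B by auto
    have "t \<noteq> x" using tT xT by auto
    have "\<not> x < t"
    proof
      assume "x < t" then have "Q T' A t" using S1 tT by blast
      then show False using tT B' T'mem \<open>x < t\<close> yx by auto
    qed
    moreover have "\<not> t < y"
    proof
      assume "t < y" then have "Q T' A t" using S2 tT by blast
      then show False using tT B' T'mem \<open>t < y\<close> by auto
    qed
    ultimately show "t \<in> D" using tT \<open>t \<noteq> x\<close> D_def by auto
  qed
  have DB: "D \<subseteq> B" using D_def B by auto
  have DB': "D \<inter> B' = {}" using D_def by auto
  show ?thesis
  proof (cases "x \<in> B'")
    case False
    have "D = {}" using S6 False by blast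
    then have "B' = B" using sub1 sub2 False by blast
    then show ?thesis unfolding B_def B'_def T'_def by simp
  next
    case True
    obtain b where bD: "b \<in> D" using S7 True by blast
    have Dsing: "\<And>t. t \<in> D \<Longrightarrow> t = b" using S5 bD by (metis linorder_neqE_nat)
    have "B' = insert x (B - {b})"
    proof (rule set_eqI, rule iffI)
      fix t assume "t \<in> B'" then show "t \<in> insert x (B - {b})" using sub1 bD DB' by auto
    next
      fix t assume "t \<in> insert x (B - {b})"
      then show "t \<in> B'" using True sub2 Dsing by blast
    qed
    moreover have "b \<in> B" "b < x" using bD DB D_def by auto
    moreover have "\<forall>z\<in>T. b < z \<and> z < x \<longrightarrow> z \<in> B" using S6 bD by blast
    ultimately show ?thesis unfolding B_def B'_def T'_def by blast
  qed
qed


lemma Hswap: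
  assumes fU: "finite U" and fT: "finite T" and BT: "B \<subseteq> T" and bB: "b \<in> B" and bx: "b < x"
    and xT: "x \<notin> T" and cl: "\<forall>z\<in>T. b < z \<and> z < x \<longrightarrow> z \<in> B"
    and KEY: "\<And>v. N U x - N U v \<le> N T x - N T (Suc v)"
  shows "tri U B = tri U (insert x (B - {b}))"
proof -
  have fB: "finite B" using fT BT finite_subset by blast
  define B' where "B' = insert x (B - {b})"
  have fB': "finite B'" using fB B'_def by simp
  have xB: "x \<notin> B" using xT BT by blast
  have NB': "\<And>v. N B' v = N B v + (if x < v then 1 else 0) - (if b < v then 1 else 0)"
    unfolding B'_def using N_swap[OF fB bB xB] by simp
  have segB: "\<And>v. b \<le> v \<Longrightarrow> v < x \<Longrightarrow> N B x - N B (Suc v) = N T x - N T (Suc v)"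
    using cl by (intro N_sub_eq[OF fT BT]) auto
  have Bx: "N B (Suc x) = N B x" using N_Suc[OF fB] xB by simp
  have eq: "\<And>u. Q U B u \<longleftrightarrow> Q U B' u"
  proof -
    fix u
    consider "x \<le> u" | "b \<le> u \<and> u < x" | "u < b" by linarith
    then show "Q U B u \<longleftrightarrow> Q U B' u"
    proof cases
      case 1
      have "\<And>m. m > u \<Longrightarrow> N B' (Suc m) - N B' (Suc u) = N B (Suc m) - N B (Suc u)"
        using NB' 1 bx by simp
      then show ?thesis unfolding Q_def by auto
    next
      case 2
      have k: "N U x - N U u \<le> N T x - N T (Suc u)" using KEY by simp
      have s: "N B x - N B (Suc u) = N T x - N T (Suc u)" using segB 2 by simp
      have "N B' (Suc x) - N B' (Suc u) = N B (Suc x) - N B (Suc u) + 1" using NB' 2 by simp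
      then have "Q U B u" "Q U B' u" unfolding Q_def using 2 k s Bx by (auto intro!: exI[of _ x])
      then show ?thesis by simp
    next
      case 3
      show ?thesis
      proof
        assume "Q U B u"
        then obtain m where m: "m > u" "N U m - N U u \<le> N B (Suc m) - N B (Suc u)" unfolding Q_def by blast
        show "Q U B' u"
        proof (cases "b \<le> m \<and> m < x")
          case True
          have "N B' (Suc x) - N B' (Suc u) = N B x - N B (Suc u)" using NB' 3 bx Bx by simp
          moreover have "N B x - N B (Suc m) = N T x - N T (Suc m)" using segB True by simp
          moreover have "N U x - N U m \<le> N T x - N T (Suc m)" using KEY by simp
          ultimately have "N U x - N U u \<le> N B' (Suc x) - N B' (Suc u)" using m by linarith
          then show ?thesis unfolding Q_def using 3 bx by (intro exI[of _ x]) auto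
        next
          case False
          then have "N B' (Suc m) - N B' (Suc u) = N B (Suc m) - N B (Suc u)" using NB' 3 bx by auto
          then show ?thesis unfolding Q_def using m by (intro exI[of _ m]) auto
        qed
      next
        assume "Q U B' u"
        then obtain m where m: "m > u" "N U m - N U u \<le> N B' (Suc m) - N B' (Suc u)" unfolding Q_def by blast
        have "N B' (Suc m) - N B' (Suc u) \<le> N B (Suc m) - N B (Suc u)" using NB' 3 bx by auto
        then show "Q U B u" unfolding Q_def using m by (intro exI[of _ m]) auto
      qed
    qed
  qed
  show ?thesis using CH[OF fU fB] CH[OF fU fB'] eq B'_def by simp
qed

theorem lemma4p16:
  fixes U T S :: "nat set" and x y :: nat
  assumes "finite U" "finite T" "finite S"
    and "0 \<notin> U" "0 \<notin> T" "0 \<notin> S"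
    and "prec U T" "prec T S"
    and "x > 0" "x \<notin> T" "card (below U x) = card (below T x)"
    and "y \<in> below T x" "prec ((T \<union> {x}) - {y}) S"
    and "\<And>z. z \<in> below T x \<Longrightarrow> prec ((T \<union> {x}) - {z}) S \<Longrightarrow> y \<le> z"
  shows "(\<forall>S'. S' \<subseteq> S \<longrightarrow> tri U (tri T S') = tri U (tri ((T \<union> {x}) - {y}) S'))
         \<and> tri U T = tri U ((T \<union> {x}) - {y})"
proof -
  note fU = assms(1) and fT = assms(2) and fS = assms(3) and xT = assms(10)
  have yT: "y \<in> T" and yx: "y < x" using assms(12) by (auto simp: below_def)
  have T'eq: "(T \<union> {x}) - {y} = insert x (T - {y})" using yx by auto
  define T' where "T' = insert x (T - {y})"
  have fT': "finite T'" using fT T'_def by simp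
  have NT: "\<And>v. N T' v = N T v + (if x < v then 1 else 0) - (if y < v then 1 else 0)"
    unfolding T'_def using N_swap[OF fT yT xT] by simp
  have NS: "\<And>v. N T (Suc v) = N T v + (if v \<in> T then 1 else 0)" using N_Suc[OF fT] by simp
  have UT: "\<And>v. N T (Suc v) \<le> N U v" using assms(7) prec_N[OF fU fT] by simp
  have Ux: "N U x = N T x" using assms(11) by (simp add: below_def N_def)
  have KEY: "\<And>v. N U x - N U v \<le> N T x - N T (Suc v)" using UT Ux by (metis diff_left_mono)
  have KS: "\<And>v. N S (Suc v) \<le> N T v" using assms(8) prec_N[OF fT fS] by simp
  have KS': "\<And>v. N S (Suc v) \<le> N T' v" using assms(13) prec_N[OF fT' fS] T'eq T'_def by simp
  have tight: "N T y \<le> N S (Suc y)"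
  proof (rule ccontr)
    assume nt: "\<not> ?thesis"
    define L where "L = {t\<in>T. t < y}"
    have "L \<noteq> {}"
    proof
      assume "L = {}" then have "N T y = 0" unfolding N_def L_def by simp
      moreover have "N S (Suc y) \<ge> 0" unfolding N_def by simp
      ultimately show False using nt by simp
    qed
    moreover have fL: "finite L" using fT L_def by simp
    ultimately have zL: "Max L \<in> L" using Max_in by blast
    define z where "z = Max L"
    have z: "z \<in> T" "z < y" using zL z_def L_def by auto
    have zmax: "\<And>t. t \<in> T \<Longrightarrow> t < y \<Longrightarrow> t \<le> z" using fL z_def L_def by simp
    define Tz where "Tz = insert x (T - {z})"
    have fTz: "finite Tz" using fT Tz_def by simp
    have NTz: "\<And>v. N Tz v = N T v + (if x < v then 1 else 0) - (if z < v then 1 else 0)"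
      unfolding Tz_def using N_swap[OF fT z(1) xT] by simp
    have "\<forall>v. N S (Suc v) \<le> N Tz v"
    proof
      fix v
      consider "v \<le> z" | "z < v \<and> v \<le> y" | "y < v" by linarith
      then show "N S (Suc v) \<le> N Tz v"
      proof cases
        case 1 then show ?thesis using NTz KS[of v] z yx by simp
      next
        case 2
        have "N T y = N T v" using 2 zmax by (intro N_empty_seg[OF fT]) force+
        moreover have "N S (Suc v) \<le> N S (Suc y)" using N_mono[OF fS] 2 by simp
        moreover have "N Tz v = N T v - 1" using NTz 2 yx by simp
        ultimately show ?thesis using nt by simp
      next
        case 3
        have "N Tz v = N T' v" using NTz NT 3 z by simp
        then show ?thesis using KS' by simp
      qed
    qed
    then have "prec Tz S" using prec_N[OF fTz fS] by simp
    moreover have "(T \<union> {x}) - {z} = Tz" using z yx Tz_def by auto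
    moreover have "z \<in> below T x" using z yx by (simp add: below_def)
    ultimately have "y \<le> z" using assms(14) by simp
    then show False using z by simp
  qed
  have NT'y: "N T' (Suc y) = N T y" using NT NS yT yx by simp
  have part2: "tri U T = tri U T'"
    unfolding T'_def using Hswap[OF fU fT _ yT yx xT _ KEY] by auto
  have part1: "\<And>S'. S' \<subseteq> S \<Longrightarrow> tri U (tri T S') = tri U (tri T' S')"
  proof -
    fix S' assume SS: "S' \<subseteq> S"
    have fS': "finite S'" using SS fS finite_subset by blast
    have F: "\<And>v. y \<le> v \<Longrightarrow> N S' (Suc v) - N S' (Suc y) \<le> N T' v - N T' (Suc y)"
    proof -
      fix v assume v: "y \<le> v"
      have "N S' (Suc v) - N S' (Suc y) \<le> N S (Suc v) - N S (Suc y)" using N_subset[OF fS SS] v by simp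
      then show "N S' (Suc v) - N S' (Suc y) \<le> N T' v - N T' (Suc y)" using KS'[of v] tight NT'y by linarith
    qed
    have "tri T' S' = tri T S' \<or>
      (\<exists>b\<in>tri T S'. b < x \<and> (\<forall>z\<in>T. b < z \<and> z < x \<longrightarrow> z \<in> tri T S')
        \<and> tri T' S' = insert x (tri T S' - {b}))"
      using structural[OF fT fS' yT xT yx] F unfolding T'_def by blast
    then show "tri U (tri T S') = tri U (tri T' S')"
    proof
      assume "tri T' S' = tri T S'" then show ?thesis by simp
    next
      assume "\<exists>b\<in>tri T S'. b < x \<and> (\<forall>z\<in>T. b < z \<and> z < x \<longrightarrow> z \<in> tri T S')
        \<and> tri T' S' = insert x (tri T S' - {b})"
      then obtain b where b: "b \<in> tri T S'" "b < x" "\<forall>z\<in>T. b < z \<and> z < x \<longrightarrow> z \<in> tri T S'"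
        "tri T' S' = insert x (tri T S' - {b})" by blast
      have "tri T S' \<subseteq> T" using CH[OF fT fS'] by auto
      then show ?thesis using Hswap[OF fU fT _ b(1) b(2) xT b(3) KEY] b(4) by simp
    qed
  qed
  show ?thesis using part1 part2 T'eq T'_def by simp
qed

end
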